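(* Let $0<\alpha\le\beta<\infty$ and $\varphi\in\mathcal{K}(\alpha,\beta)$. Then for all $a,b\in\mathbb{C}\setminus\{0\}$: (i) if $\beta\le1$, then $|\varphi(|a|)\mathrm{sign}(a)-\varphi(|b|)\mathrm{sign}(b)|\le\varphi(|a-b|)+4\frac{|a-b|}{|a|+|b|}\varphi(|a|+|b|)$; (ii) if $\beta\ge1$, then $|\varphi(|a|)\mathrm{sign}(a)-\varphi(|b|)\mathrm{sign}(b)|\le(2\beta+4)\frac{|a-b|}{|a|+|b|}\varphi(|a|+|b|)$.
   Context: For $0<\alpha\le\beta<\infty$, a non-decreasing continuous function $\varphi:[0,\infty)\to[0,\infty)$ with $\varphi(0)=0$ is in the class $\mathcal{K}(\alpha,\beta)$ if $\varphi(t)/t^\alpha$ is non-decreasing and $\varphi(t)/t^\beta$ is non-increasing on $t>0$. For $a\in\mathbb{C}\setminus\{0\}$, $\mathrm{sign}(a)=a/|a|$. *)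

theory Defs
  imports "HOL-Analysis.Analysis"
begin

definition classK :: "real \<Rightarrow> real \<Rightarrow> (real \<Rightarrow> real) \<Rightarrow> bool" where
  "classK \<alpha> \<beta> \<phi> \<longleftrightarrow>
     mono_on {0..} \<phi> \<and> continuous_on {0..} \<phi> \<and> \<phi> 0 = 0 \<and> (\<forall>t\<ge>0. \<phi> t \<ge> 0) \<and>
     mono_on {0<..} (\<lambda>t. \<phi> t / t powr \<alpha>) \<and>
     antimono_on {0<..} (\<lambda>t. \<phi> t / t powr \<beta>)"

end

theory Submission
  imports Defs
begin

lemma anti_D:
  assumes "antimono_on {0<..} (f::real\<Rightarrow>real)" "0 < x" "x \<le> y"
  shows "f y \<le> f x"
  using assms unfolding monotone_on_def by auto

lemma phi_div_anti:
  assumes K: "classK \<alpha> \<beta> \<phi>" and b1: "\<beta> \<le> 1" and x: "0 < x" and xy: "x \<le> y"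
  shows "\<phi> y / y \<le> \<phi> x / x"
proof -
  have A: "antimono_on {0<..} (\<lambda>t. \<phi> t / t powr \<beta>)" and nn: "\<forall>t\<ge>0. \<phi> t \<ge> 0"
    using K unfolding classK_def by auto
  have y: "0 < y" using x xy by linarith
  have "\<phi> y / y powr \<beta> \<le> \<phi> x / x powr \<beta>" using anti_D[OF A x xy] by simp
  hence "\<phi> y \<le> \<phi> x * (y powr \<beta> / x powr \<beta>)"
    using x y by (simp add: field_simps)
  also have "y powr \<beta> / x powr \<beta> = (y/x) powr \<beta>" using x y by (simp add: powr_divide)
  also have "(y/x) powr \<beta> \<le> (y/x) powr 1"
    using x xy b1 by (intro powr_mono) (auto simp: field_simps)
  finally have "\<phi> y \<le> \<phi> x * (y/x)"
    using nn x by (smt (verit) mult_left_mono powr_one_gt_zero_iff y divide_pos_pos)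
  thus ?thesis using x y by (simp add: field_simps)
qed

lemma subadd:
  assumes K: "classK \<alpha> \<beta> \<phi>" and b1: "\<beta> \<le> 1" and x: "0 < x" and y: "0 < y"
  shows "\<phi> (x + y) \<le> \<phi> x + \<phi> y"
proof -
  have 1: "\<phi> (x+y) / (x+y) \<le> \<phi> x / x" using phi_div_anti[OF K b1 x, of "x+y"] y by simp
  have 2: "\<phi> (x+y) / (x+y) \<le> \<phi> y / y" using phi_div_anti[OF K b1 y, of "x+y"] x by simp
  have "x * (\<phi> (x+y) / (x+y)) + y * (\<phi> (x+y) / (x+y)) = (x+y) * (\<phi> (x+y) / (x+y))"
    by (rule distrib_right[symmetric])
  hence "\<phi> (x+y) = x * (\<phi> (x+y) / (x+y)) + y * (\<phi> (x+y) / (x+y))"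
    using x y by simp
  also have "\<dots> \<le> x * (\<phi> x / x) + y * (\<phi> y / y)"
    using 1 2 x y by (intro add_mono mult_left_mono) auto
  finally show ?thesis using x y by simp
qed

lemma first_i:
  assumes K: "classK \<alpha> \<beta> \<phi>" and b1: "\<beta> \<le> 1" and s: "0 < s" and sr: "s \<le> r" and d: "r - s \<le> d"
  shows "\<phi> r - \<phi> s \<le> \<phi> d"
proof -
  have M: "mono_on {0..} \<phi>" and nn: "\<forall>t\<ge>0. \<phi> t \<ge> 0"
    using K unfolding classK_def by auto
  show ?thesis
  proof (cases "s = r")
    case True thus ?thesis using nn d by auto
  next
    case False
    hence p: "0 < r - s" using sr by linarith
    have "\<phi> r \<le> \<phi> s + \<phi> (r - s)" using subadd[OF K b1 s p] by simp
    moreover have "\<phi> (r - s) \<le> \<phi> d" using mono_onD[OF M, of "r-s" d] p d by auto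
    ultimately show ?thesis by linarith
  qed
qed

lemma first_ii:
  assumes K: "classK \<alpha> \<beta> \<phi>" and b1: "1 \<le> \<beta>" and s: "0 < s" and sr: "s \<le> r"
  shows "\<phi> r - \<phi> s \<le> (2*\<beta>+2) * ((r - s) / (r + s)) * \<phi> (r + s)"
proof -
  have M: "mono_on {0..} \<phi>" and nn: "\<forall>t\<ge>0. \<phi> t \<ge> 0"
    and A: "antimono_on {0<..} (\<lambda>t. \<phi> t / t powr \<beta>)"
    using K unfolding classK_def by auto
  have r: "0 < r" using s sr by linarith
  have prs: "\<phi> r \<le> \<phi> (r+s)" using mono_onD[OF M, of r "r+s"] r s by auto
  have pr0: "0 \<le> \<phi> r" using nn r by auto
  have "\<phi> r / r powr \<beta> \<le> \<phi> s / s powr \<beta>" using anti_D[OF A s sr] by simp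
  hence "\<phi> r * (s powr \<beta> / r powr \<beta>) \<le> \<phi> s"
    using r s by (simp add: field_simps)
  also have "s powr \<beta> / r powr \<beta> = (s/r) powr \<beta>" using r s by (simp add: powr_divide)
  finally have h1: "\<phi> r * (s/r) powr \<beta> \<le> \<phi> s" .
  have "(s/r) powr \<beta> = exp (\<beta> * ln (s/r))" using r s by (simp add: powr_def)
  also have "\<dots> \<ge> 1 + \<beta> * ln (s/r)" by (rule exp_ge_add_one_self)
  finally have e: "1 + \<beta> * ln (s/r) \<le> (s/r) powr \<beta>" .
  have "ln (r/s) \<le> r/s - 1" using r s by (intro ln_le_minus_one) auto
  moreover have "ln (s/r) = - ln (r/s)" using r s by (simp add: ln_div)
  ultimately have "ln (s/r) \<ge> -(r/s - 1)" by linarith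
  hence "\<beta> * ln (s/r) \<ge> \<beta> * (-(r/s - 1))" using b1 by (intro mult_left_mono) auto
  moreover have "\<beta> * (-(r/s - 1)) = -(\<beta> * ((r - s)/s))" using s by (simp add: field_simps)
  ultimately have "-(\<beta> * ((r - s)/s)) \<le> \<beta> * ln (s/r)" by simp
  with e have "1 - \<beta> * ((r - s)/s) \<le> (s/r) powr \<beta>" by linarith
  hence "\<phi> r * (1 - \<beta> * ((r - s)/s)) \<le> \<phi> r * (s/r) powr \<beta>" using pr0 by (rule mult_left_mono)
  with h1 have key: "\<phi> r - \<phi> s \<le> \<phi> r * (\<beta> * ((r - s)/s))" by (simp add: algebra_simps)
  show ?thesis
  proof (cases "\<beta> * r \<le> (\<beta> + 2) * s")
    case True
    have "\<beta> * ((r - s)/s) \<le> (2*\<beta>+2) * ((r - s) / (r + s))"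
    proof -
      have "\<beta> * (r - s) * (r + s) \<le> (2*\<beta>+2) * (r - s) * s"
      proof -
        have "\<beta> * (r + s) \<le> (2*\<beta>+2) * s" using True by (simp add: algebra_simps)
        hence "(r - s) * (\<beta> * (r + s)) \<le> (r - s) * ((2*\<beta>+2) * s)" using sr by (intro mult_left_mono) auto
        thus ?thesis by (simp add: algebra_simps)
      qed
      thus ?thesis using r s by (simp add: field_simps)
    qed
    have q0: "0 \<le> \<beta> * ((r - s)/s)" using b1 sr s by simp
    have "\<phi> r * (\<beta> * ((r - s)/s)) \<le> \<phi> (r+s) * (\<beta> * ((r - s)/s))"
      using prs q0 by (rule mult_right_mono)
    also have "\<dots> \<le> \<phi> (r+s) * ((2*\<beta>+2) * ((r - s) / (r + s)))"
      using \<open>\<beta> * ((r - s)/s) \<le> _\<close> pr0 prs by (intro mult_left_mono) auto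
    also have "\<dots> = (2*\<beta>+2) * ((r - s) / (r + s)) * \<phi> (r + s)" by (rule mult.commute)
    finally show ?thesis using key by linarith
  next
    case False
    have "1 \<le> (2*\<beta>+2) * ((r - s) / (r + s))"
    proof -
      have "r + s \<le> (2*\<beta>+2) * (r - s)" using False s b1 r by (simp add: algebra_simps)
      hence "1 \<le> ((2*\<beta>+2) * (r - s)) / (r + s)" using r s by (subst pos_le_divide_eq) auto
      thus ?thesis by simp
    qed
    hence "1 * \<phi> (r+s) \<le> (2*\<beta>+2) * ((r - s) / (r + s)) * \<phi> (r+s)"
      using pr0 prs by (intro mult_right_mono) auto
    hence "\<phi> (r+s) \<le> (2*\<beta>+2) * ((r - s) / (r + s)) * \<phi> (r+s)" by simp
    moreover have "0 \<le> \<phi> s" using nn s by simp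
    hence "\<phi> r - \<phi> s \<le> \<phi> (r+s)" using prs by linarith
    ultimately show ?thesis by linarith
  qed
qed

lemma dunkl:
  fixes a b :: "'a::real_inner"
  assumes a: "a \<noteq> 0" and b: "b \<noteq> 0"
  shows "norm (sgn a - sgn b) \<le> 2 * (norm (a - b) / (norm a + norm b))"
proof -
  define r where "r = norm a"
  define s where "s = norm b"
  define p where "p = inner a b"
  have r: "r > 0" and s: "s > 0" using a b by (auto simp: r_def s_def)
  have pb: "p \<le> r * s" "0 \<le> p + r * s"
    using Cauchy_Schwarz_ineq2[of a b] by (auto simp: p_def r_def s_def abs_le_iff)
  have n1: "(norm (sgn a - sgn b))^2 = 2 - 2 * p / (r * s)"
  proof -
    have "inner (sgn a)(sgn a) = (norm (sgn a))^2" by (rule power2_norm_eq_inner[symmetric])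
    hence i1: "inner (sgn a) (sgn a) = 1" using a by (simp add: norm_sgn)
    have "inner (sgn b)(sgn b) = (norm (sgn b))^2" by (rule power2_norm_eq_inner[symmetric])
    hence i2: "inner (sgn b) (sgn b) = 1" using b by (simp add: norm_sgn)
    have i3: "inner (sgn a) (sgn b) = p / (r * s)"
      unfolding sgn_div_norm p_def r_def s_def by (simp add: field_simps)
    have i4: "inner (sgn b) (sgn a) = p / (r * s)" using i3 by (simp add: inner_commute)
    show ?thesis unfolding power2_norm_eq_inner using i1 i2 i3 i4 by (simp add: inner_diff)
  qed
  have n2: "(norm (a - b))^2 = r^2 + s^2 - 2 * p"
    unfolding power2_norm_eq_inner r_def s_def p_def
    by (simp add: inner_diff inner_commute)
  have "(2 - 2 * p / (r * s)) * (r + s)^2 \<le> 4 * (r^2 + s^2 - 2 * p)"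
  proof -
    have "(2 * r * s - 2 * p) * (r + s)^2 \<le> 4 * r * s * (r^2 + s^2 - 2 * p)"
    proof -
      have "4 * r * s * (r^2 + s^2 - 2 * p) - (2 * r * s - 2 * p) * (r + s)^2
            = 2 * (r - s)^2 * (r * s + p)" by (simp add: algebra_simps power2_eq_square)
      moreover have "0 \<le> 2 * (r - s)^2 * (r * s + p)" using pb by simp
      ultimately show ?thesis by linarith
    qed
    moreover have "(2 - 2 * p / (r * s)) = (2 * r * s - 2 * p) / (r * s)" using r s by (simp add: field_simps)
    ultimately show ?thesis using r s by (simp add: field_simps)
  qed
  hence "(norm (sgn a - sgn b))^2 * (r + s)^2 \<le> 4 * (norm (a - b))^2" using n1 n2 by simp
  hence "(norm (sgn a - sgn b) * (r + s))^2 \<le> (2 * norm (a - b))^2" by (simp add: power_mult_distrib)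
  hence "norm (sgn a - sgn b) * (r + s) \<le> 2 * norm (a - b)"
    by (rule power2_le_imp_le) simp
  hence "norm (sgn a - sgn b) \<le> 2 * norm (a - b) / (r + s)"
    using r s by (subst pos_le_divide_eq) auto
  thus ?thesis by (simp add: r_def s_def)
qed

lemma decomp:
  fixes a b :: complex and \<phi> :: "real \<Rightarrow> real"
  assumes a: "a \<noteq> 0" and b: "b \<noteq> 0" and nn: "\<forall>t\<ge>0. \<phi> t \<ge> 0"
  shows "cmod (complex_of_real (\<phi> (cmod a)) * sgn a - complex_of_real (\<phi> (cmod b)) * sgn b)
    \<le> \<bar>\<phi> (cmod a) - \<phi> (cmod b)\<bar> + \<phi> (cmod b) * (2 * (cmod (a - b) / (cmod a + cmod b)))"
proof -
  have eq: "complex_of_real (\<phi> (cmod a)) * sgn a - complex_of_real (\<phi> (cmod b)) * sgn b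
     = complex_of_real (\<phi> (cmod a) - \<phi> (cmod b)) * sgn a + complex_of_real (\<phi> (cmod b)) * (sgn a - sgn b)"
    by (simp add: algebra_simps)
  have "cmod (complex_of_real (\<phi> (cmod a) - \<phi> (cmod b)) * sgn a + complex_of_real (\<phi> (cmod b)) * (sgn a - sgn b))
     \<le> cmod (complex_of_real (\<phi> (cmod a) - \<phi> (cmod b)) * sgn a) + cmod (complex_of_real (\<phi> (cmod b)) * (sgn a - sgn b))"
    by (rule norm_triangle_ineq)
  also have "\<dots> = \<bar>\<phi> (cmod a) - \<phi> (cmod b)\<bar> + \<phi> (cmod b) * cmod (sgn a - sgn b)"
    using a nn by (simp add: norm_mult norm_sgn flip: of_real_diff)
  also have "\<dots> \<le> \<bar>\<phi> (cmod a) - \<phi> (cmod b)\<bar> + \<phi> (cmod b) * (2 * (cmod (a - b) / (cmod a + cmod b)))"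
    using dunkl[OF a b] nn by (intro add_left_mono mult_left_mono) auto
  finally show ?thesis using eq by simp
qed

lemma main_wlog:
  fixes \<alpha> \<beta> :: real and \<phi> :: "real \<Rightarrow> real" and a b :: complex
  assumes "0 < \<alpha>" and "\<alpha> \<le> \<beta>" and K: "classK \<alpha> \<beta> \<phi>"
    and a: "a \<noteq> 0" and b: "b \<noteq> 0" and ba: "cmod b \<le> cmod a"
  shows "(\<beta> \<le> 1 \<longrightarrow>
           cmod (complex_of_real (\<phi> (cmod a)) * sgn a - complex_of_real (\<phi> (cmod b)) * sgn b)
             \<le> \<phi> (cmod (a - b)) + 4 * (cmod (a - b) / (cmod a + cmod b)) * \<phi> (cmod a + cmod b))
       \<and> (1 \<le> \<beta> \<longrightarrow>
           cmod (complex_of_real (\<phi> (cmod a)) * sgn a - complex_of_real (\<phi> (cmod b)) * sgn b)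
             \<le> (2 * \<beta> + 4) * (cmod (a - b) / (cmod a + cmod b)) * \<phi> (cmod a + cmod b))"
proof -
  have M: "mono_on {0..} \<phi>" and nn: "\<forall>t\<ge>0. \<phi> t \<ge> 0"
    using K unfolding classK_def by auto
  define r where "r = cmod a"
  define s where "s = cmod b"
  define d where "d = cmod (a - b)"
  have s: "0 < s" using b by (simp add: s_def)
  have sr: "s \<le> r" using ba by (simp add: r_def s_def)
  have rsd: "r - s \<le> d" unfolding r_def s_def d_def by (rule norm_triangle_ineq2)
  have d0: "0 \<le> d" by (simp add: d_def)
  have D: "cmod (complex_of_real (\<phi> r) * sgn a - complex_of_real (\<phi> s) * sgn b)
    \<le> \<bar>\<phi> r - \<phi> s\<bar> + \<phi> s * (2 * (d / (r + s)))"
    using decomp[OF a b nn] by (simp add: r_def s_def d_def)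
  have mrs: "\<phi> s \<le> \<phi> r" using mono_onD[OF M, of s r] s sr by auto
  have ms: "\<phi> s \<le> \<phi> (r + s)" using mono_onD[OF M, of s "r+s"] s sr by auto
  have q0: "0 \<le> d / (r + s)" using d0 s sr by simp
  have T2: "\<phi> s * (2 * (d / (r + s))) \<le> 2 * (d / (r + s)) * \<phi> (r + s)"
  proof -
    have "\<phi> s * (2 * (d / (r + s))) \<le> \<phi> (r + s) * (2 * (d / (r + s)))"
      using ms q0 by (intro mult_right_mono) auto
    thus ?thesis by (simp only: mult.commute)
  qed
  have P0: "0 \<le> d / (r + s) * \<phi> (r + s)" using q0 nn s sr by (intro mult_nonneg_nonneg) auto
  define Q where "Q = d / (r + s) * \<phi> (r + s)"
  have g1: "\<And>q p::real. 4 * q * p = 4 * (q * p)" "\<And>q p::real. 2 * q * p = 2 * (q * p)"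
    "\<And>q p::real. (2 * \<beta> + 4) * q * p = (2*\<beta>+2) * (q * p) + 2 * (q * p)"
    "\<And>q p::real. (2*\<beta>+2) * q * p = (2*\<beta>+2) * (q * p)"
    by (simp_all add: algebra_simps)
  have E4: "4 * (d / (r + s)) * \<phi> (r + s) = 4 * Q" "2 * (d / (r + s)) * \<phi> (r + s) = 2 * Q"
    "(2 * \<beta> + 4) * (d / (r + s)) * \<phi> (r + s) = (2*\<beta>+2) * Q + 2 * Q"
    "(2*\<beta>+2) * (d / (r + s)) * \<phi> (r + s) = (2*\<beta>+2) * Q"
    unfolding Q_def by (rule g1)+
  have Q0: "0 \<le> Q" using P0 Q_def by simp
  have "(\<beta> \<le> 1 \<longrightarrow>
        cmod (complex_of_real (\<phi> r) * sgn a - complex_of_real (\<phi> s) * sgn b)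
          \<le> \<phi> d + 4 * (d / (r + s)) * \<phi> (r + s))
     \<and> (1 \<le> \<beta> \<longrightarrow>
        cmod (complex_of_real (\<phi> r) * sgn a - complex_of_real (\<phi> s) * sgn b)
          \<le> (2 * \<beta> + 4) * (d / (r + s)) * \<phi> (r + s))"
  proof (intro conjI impI)
    assume b1: "\<beta> \<le> 1"
    have "\<phi> r - \<phi> s \<le> \<phi> d" by (rule first_i[OF K b1 s sr rsd])
    thus "cmod (complex_of_real (\<phi> r) * sgn a - complex_of_real (\<phi> s) * sgn b)
          \<le> \<phi> d + 4 * (d / (r + s)) * \<phi> (r + s)" using D T2 mrs Q0 E4 by linarith
  next
    assume b1: "1 \<le> \<beta>"
    have F: "\<phi> r - \<phi> s \<le> (2*\<beta>+2) * ((r - s) / (r + s)) * \<phi> (r + s)" by (rule first_ii[OF K b1 s sr])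
    have "(r - s) / (r + s) \<le> d / (r + s)" using rsd s sr by (intro divide_right_mono) auto
    hence "(2*\<beta>+2) * ((r - s) / (r + s)) * \<phi> (r + s) \<le> (2*\<beta>+2) * (d / (r + s)) * \<phi> (r + s)"
      using b1 nn s sr by (intro mult_right_mono mult_left_mono) auto
    then show "cmod (complex_of_real (\<phi> r) * sgn a - complex_of_real (\<phi> s) * sgn b)
          \<le> (2 * \<beta> + 4) * (d / (r + s)) * \<phi> (r + s)" using F D T2 mrs E4 by linarith
  qed
  thus ?thesis unfolding r_def s_def d_def .
qed

theorem mainTheorem9:
  fixes \<alpha> \<beta> :: real and \<phi> :: "real \<Rightarrow> real" and a b :: complex
  assumes "0 < \<alpha>" and "\<alpha> \<le> \<beta>" and "classK \<alpha> \<beta> \<phi>"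
    and "a \<noteq> 0" and "b \<noteq> 0"
  shows "(\<beta> \<le> 1 \<longrightarrow>
           cmod (complex_of_real (\<phi> (cmod a)) * sgn a - complex_of_real (\<phi> (cmod b)) * sgn b)
             \<le> \<phi> (cmod (a - b)) + 4 * (cmod (a - b) / (cmod a + cmod b)) * \<phi> (cmod a + cmod b))
       \<and> (1 \<le> \<beta> \<longrightarrow>
           cmod (complex_of_real (\<phi> (cmod a)) * sgn a - complex_of_real (\<phi> (cmod b)) * sgn b)
             \<le> (2 * \<beta> + 4) * (cmod (a - b) / (cmod a + cmod b)) * \<phi> (cmod a + cmod b))"
proof (cases "cmod b \<le> cmod a")
  case True
  show ?thesis by (rule main_wlog[OF assms True])
next
  case False
  have "cmod a \<le> cmod b" using False by simp
  have e1: "cmod (b - a) = cmod (a - b)" by (rule norm_minus_commute)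
  have e2: "cmod b + cmod a = cmod a + cmod b" by (rule add.commute)
  have e3: "cmod (complex_of_real (\<phi> (cmod b)) * sgn b - complex_of_real (\<phi> (cmod a)) * sgn a)
     = cmod (complex_of_real (\<phi> (cmod a)) * sgn a - complex_of_real (\<phi> (cmod b)) * sgn b)"
    by (rule norm_minus_commute)
  have W: "(\<beta> \<le> 1 \<longrightarrow>
           cmod (complex_of_real (\<phi> (cmod b)) * sgn b - complex_of_real (\<phi> (cmod a)) * sgn a)
             \<le> \<phi> (cmod (b - a)) + 4 * (cmod (b - a) / (cmod b + cmod a)) * \<phi> (cmod b + cmod a))
       \<and> (1 \<le> \<beta> \<longrightarrow>
           cmod (complex_of_real (\<phi> (cmod b)) * sgn b - complex_of_real (\<phi> (cmod a)) * sgn a)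
             \<le> (2 * \<beta> + 4) * (cmod (b - a) / (cmod b + cmod a)) * \<phi> (cmod b + cmod a))"
    by (rule main_wlog[OF assms(1-3) assms(5) assms(4) \<open>cmod a \<le> cmod b\<close>])
  show ?thesis using W by (simp only: e1 e3 e2)
qed

end
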